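(* Let $F=(f^{(1)},f^{(2)},\dots,f^{(j)},\dots)$ be a non-degenerate circular net with a family of spherical curvature lines, where $f^{(j)}$ lies on the sphere $s_j\in\mathbb{P}(\mathcal{L})$, the spheres $s_1,s_2,\dots$ are pairwise distinct, and their representatives are normalized by $\langle \mathfrak{s}_j,\mathfrak{p}\rangle=-1$ for all $j$. Let $\lambda_{12},\lambda_{23},\dots,\lambda_{j,j+1},\dots\in\mathbb{R}$ be arbitrary (folding parameters). Define $\sigma_{12}$ to be the inversion in $$\mathfrak{n}_{12}:=\mathfrak{s}_1+\lambda_{12}\mathfrak{s}_2-(1+\lambda_{12})\mathfrak{p},$$ and recursively, for $j\ge 2$, with $\Phi_j:=\sigma_{j-1,j}\circ\cdots\circ\sigma_{12}$, $\bar{\mathfrak{s}}_j:=\Phi_j(\mathfrak{s}_j)$ and $\hat{\mathfrak{s}}_{j+1}:=\Phi_j(\mathfrak{s}_{j+1})$, let $\sigma_{j,j+1}$ be the inversion in $$\mathfrak{n}_{j,j+1}:=\bar{\mathfrak{s}}_j+\lambda_{j,j+1}\hat{\mathfrak{s}}_{j+1}-(1+\lambda_{j,j+1})\mathfrak{p}.$$ Then the net $$\tilde F:=\big(f^{(1)},\ \sigma_{12}(f^{(2)}),\ \dots,\ \sigma_{k-1,k}\circ\cdots\circ\sigma_{12}(f^{(k)}),\ \dots\big)$$ is again a circular net with a family of spherical curvature lines, the $k$-th curve lying on the sphere $\bar{\mathfrak{s}}_k$ (with $\bar{\mathfrak{s}}_1:=\mathfrak{s}_1$).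
   Context: Light cone model: $\mathbb{R}^{4,2}$ is $\mathbb{R}^6$ with a symmetric bilinear form $\langle\cdot,\cdot\rangle$ of signature $(4,2)$; $\mathcal{L}=\{v:\langle v,v\rangle=0\}$ and $\mathbb{P}(\mathcal{L})$ is its projectivization. A fixed vector $\mathfrak{p}$ (point sphere complex) with $\langle\mathfrak{p},\mathfrak{p}\rangle=-1$ is given; elements $v\in\mathbb{P}(\mathcal{L})$ with $\langle\mathfrak{v},\mathfrak{p}\rangle=0$ represent points of $\mathbb{R}^3\cup\{\infty\}$, the others represent oriented spheres (planes count as spheres). A point lies on a sphere iff their representatives are orthogonal. Fraktur letters denote representatives (homogeneous coordinates). For $\mathfrak{a}$ with $\langle\mathfrak{a},\mathfrak{a}\rangle\neq0$ the inversion in $\mathfrak{a}$ is $\sigma_a(x)=x-\frac{2\langle x,\mathfrak{a}\rangle}{\langle\mathfrak{a},\mathfrak{a}\rangle}\mathfrak{a}$; it is an M-inversion if $\langle\mathfrak{a},\mathfrak{p}\rangle=0$ (M-inversions map points to points and generate the Möbius transformations). Four points are concircular iff their representatives are linearly dependent. A discrete curve is a map $f:\mathcal{V}\to\mathbb{P}(\mathcal{L})$ into points, $\mathcal{V}$ a set of consecutive integers, edges $(ij)$ joining consecutive vertices. Two discrete curves $f,g$ on the same $\mathcal{V}$ form a Ribaucour pair if for every edge $(ij)$ the points $f_i,f_j,g_j,g_i$ are concircular. A circular net with a family of spherical curvature lines is a sequence $(f^{(1)},f^{(2)},\dots)$ of discrete curves on a common vertex set such that consecutive curves form Ribaucour pairs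 and each $f^{(j)}$ lies on a sphere $s_j$ (i.e. $\langle\mathfrak{f}^{(j)}_t,\mathfrak{s}_j\rangle=0$ for all $t$); it is non-degenerate if consecutive curves lie on distinct spheres. The deformation $F\mapsto\tilde F$ is called a lifted-folding and the $\sigma_{j,j+1}$ folding inversions. *)

theory Defs
  imports "HOL-Analysis.Analysis"
begin

text \<open>Every symmetric bilinear form
  of signature (4,2) on R^6 is isometric to this one.\<close>

definition lor :: "real^6 \<Rightarrow> real^6 \<Rightarrow> real" where
  "lor x y = (\<Sum>i\<in>UNIV. (if i = (4::6) \<or> i = 5 then -1 else 1) * (x$i) * (y$i))"

text \<open>Representatives of elements of P(L).\<close>
definition in_cone :: "real^6 \<Rightarrow> bool" where
  "in_cone v \<longleftrightarrow> v \<noteq> 0 \<and> lor v v = 0"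

text \<open>v represents a point of R^3 \<union> {\<infinity>}.\<close>
definition is_point :: "real^6 \<Rightarrow> real^6 \<Rightarrow> bool" where
  "is_point p v \<longleftrightarrow> in_cone v \<and> lor v p = 0"

text \<open>v represents an oriented sphere (or plane).\<close>
definition is_sphere :: "real^6 \<Rightarrow> real^6 \<Rightarrow> bool" where
  "is_sphere p v \<longleftrightarrow> in_cone v \<and> lor v p \<noteq> 0"

definition proj_eq :: "real^6 \<Rightarrow> real^6 \<Rightarrow> bool" where
  "proj_eq a b \<longleftrightarrow> (\<exists>c. c \<noteq> 0 \<and> b = c *\<^sub>R a)"

text \<open>Inversion in a (meaningful when lor a a \<noteq> 0).\<close>
definition inversion :: "real^6 \<Rightarrow> real^6 \<Rightarrow> real^6" where
  "inversion a x = x - (2 * lor x a / lor a a) *\<^sub>R a"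

definition lin_dep4 :: "real^6 \<Rightarrow> real^6 \<Rightarrow> real^6 \<Rightarrow> real^6 \<Rightarrow> bool" where
  "lin_dep4 a b c d \<longleftrightarrow> (\<exists>c1 c2 c3 c4. (c1, c2, c3, c4) \<noteq> (0, 0, 0, 0) \<and>
     c1 *\<^sub>R a + c2 *\<^sub>R b + c3 *\<^sub>R c + c4 *\<^sub>R d = 0)"

definition consecutive_ints :: "int set \<Rightarrow> bool" where
  "consecutive_ints V \<longleftrightarrow> (\<forall>a b c. a \<in> V \<and> b \<in> V \<and> a \<le> c \<and> c \<le> b \<longrightarrow> c \<in> V)"

definition curve_index_set :: "nat set \<Rightarrow> bool" where
  "curve_index_set J \<longleftrightarrow> 1 \<in> J \<and> 0 \<notin> J \<and> (\<forall>j k. 1 \<le> j \<and> j \<le> k \<and> k \<in> J \<longrightarrow> j \<in> J)"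

definition discrete_curve :: "real^6 \<Rightarrow> int set \<Rightarrow> (int \<Rightarrow> real^6) \<Rightarrow> bool" where
  "discrete_curve p V f \<longleftrightarrow> (\<forall>t\<in>V. is_point p (f t))"

definition ribaucour_pair :: "int set \<Rightarrow> (int \<Rightarrow> real^6) \<Rightarrow> (int \<Rightarrow> real^6) \<Rightarrow> bool" where
  "ribaucour_pair V f g \<longleftrightarrow>
     (\<forall>i. i \<in> V \<and> i + 1 \<in> V \<longrightarrow> lin_dep4 (f i) (f (i + 1)) (g (i + 1)) (g i))"

definition circ_net_sph :: "real^6 \<Rightarrow> nat set \<Rightarrow> int set \<Rightarrow> (nat \<Rightarrow> int \<Rightarrow> real^6)
    \<Rightarrow> (nat \<Rightarrow> real^6) \<Rightarrow> bool" where
  "circ_net_sph p J V f s \<longleftrightarrow>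
     (\<forall>j\<in>J. discrete_curve p V (f j) \<and> is_sphere p (s j) \<and> (\<forall>t\<in>V. lor (f j t) (s j) = 0)) \<and>
     (\<forall>j. j \<in> J \<and> Suc j \<in> J \<longrightarrow> ribaucour_pair V (f j) (f (Suc j)))"

definition nondegenerate :: "nat set \<Rightarrow> (nat \<Rightarrow> real^6) \<Rightarrow> bool" where
  "nondegenerate J s \<longleftrightarrow> (\<forall>j. j \<in> J \<and> Suc j \<in> J \<longrightarrow> \<not> proj_eq (s j) (s (Suc j)))"

text \<open>Folding maps: Phi p s lam j = sigma_{j-1,j} o ... o sigma_{12} (Phi _ _ _ 1 = id),
  lam j = lambda_{j,j+1}, and fold_normal p s lam j = n_{j,j+1}.\<close>
fun Phi :: "real^6 \<Rightarrow> (nat \<Rightarrow> real^6) \<Rightarrow> (nat \<Rightarrow> real) \<Rightarrow> nat \<Rightarrow> real^6 \<Rightarrow> real^6" where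
  "Phi p s lam 0 = id"
| "Phi p s lam (Suc 0) = id"
| "Phi p s lam (Suc (Suc j)) =
     inversion (Phi p s lam (Suc j) (s (Suc j)) + lam (Suc j) *\<^sub>R Phi p s lam (Suc j) (s (Suc (Suc j)))
                 - (1 + lam (Suc j)) *\<^sub>R p)
     \<circ> Phi p s lam (Suc j)"

definition fold_normal :: "real^6 \<Rightarrow> (nat \<Rightarrow> real^6) \<Rightarrow> (nat \<Rightarrow> real) \<Rightarrow> nat \<Rightarrow> real^6" where
  "fold_normal p s lam j = Phi p s lam j (s j) + lam j *\<^sub>R Phi p s lam j (s (Suc j)) - (1 + lam j) *\<^sub>R p"

lemma Phi_Suc: "j \<ge> 1 \<Longrightarrow> Phi p s lam (Suc j) = inversion (fold_normal p s lam j) \<circ> Phi p s lam j"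
  by (cases j) (auto simp: fold_normal_def)

end

theory Submission
  imports Defs
begin

lemma lor_sym: "lor x y = lor y x"
  by (simp add: lor_def algebra_simps)
lemma lor_add_left: "lor (x + y) z = lor x z + lor y z"
  by (simp add: lor_def sum.distrib[symmetric] algebra_simps)
lemma lor_add_right: "lor z (x + y) = lor z x + lor z y"
  by (simp add: lor_def sum.distrib[symmetric] algebra_simps)
lemma lor_diff_left: "lor (x - y) z = lor x z - lor y z"
  by (simp add: lor_def sum_subtractf[symmetric] algebra_simps)
lemma lor_diff_right: "lor z (x - y) = lor z x - lor z y"
  by (simp add: lor_def sum_subtractf[symmetric] algebra_simps)
lemma lor_scale_left: "lor (c *\<^sub>R x) z = c * lor x z"
  by (simp add: lor_def sum_distrib_left algebra_simps)
lemma lor_scale_right: "lor z (c *\<^sub>R x) = c * lor z x"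
  by (simp add: lor_def sum_distrib_left algebra_simps)
lemma lor_zero_left[simp]: "lor 0 z = 0"
  by (simp add: lor_def)
lemma lor_neg_left: "lor (- x) z = - lor x z"
  by (simp add: lor_def sum_negf[symmetric])

lemmas lor_lin = lor_add_left lor_add_right lor_diff_left lor_diff_right lor_scale_left lor_scale_right

lemma inv_lin: "linear (inversion a)"
proof (rule linearI)
  fix x y show "inversion a (x + y) = inversion a x + inversion a y"
    by (simp add: inversion_def lor_add_left add_divide_distrib scaleR_add_left algebra_simps)
next
  fix c x show "inversion a (c *\<^sub>R x) = c *\<^sub>R inversion a x"
    by (simp add: inversion_def lor_scale_left scaleR_diff_right)
qed

lemma inv_iso: "lor a a \<noteq> 0 \<Longrightarrow> lor (inversion a x) (inversion a y) = lor x y"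
  by (simp add: inversion_def lor_lin lor_sym[of a x] lor_sym[of a y] field_simps)

lemma inv_invol: "lor a a \<noteq> 0 \<Longrightarrow> inversion a (inversion a x) = x"
proof -
  assume h: "lor a a \<noteq> 0"
  have "lor (inversion a x) a = - lor x a"
    using h by (simp add: inversion_def lor_lin)
  then show ?thesis using h by (simp add: inversion_def)
qed

lemma inv_fix: "lor x a = 0 \<Longrightarrow> inversion a x = x"
  by (simp add: inversion_def)

lemma Phi_props:
  assumes k: "1 \<le> k" and pp: "lor p p = -1"
    and H: "\<forall>j. 1 \<le> j \<and> j < k \<longrightarrow> lor (fold_normal p s lam j) (fold_normal p s lam j) \<noteq> 0
              \<and> lor (s j) p = -1 \<and> lor (s (Suc j)) p = -1"
  shows "linear (Phi p s lam k) \<and> inj (Phi p s lam k) \<and>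
    (\<forall>x y. lor (Phi p s lam k x) (Phi p s lam k y) = lor x y) \<and> Phi p s lam k p = p"
  using k H
proof (induction k rule: dec_induct)
  case base
  then show ?case using linear_id by (simp add: id_def)
next
  case (step n)
  let ?F = "Phi p s lam n"
  let ?N = "fold_normal p s lam n"
  have IH: "linear ?F" "inj ?F" "\<And>x y. lor (?F x) (?F y) = lor x y" "?F p = p"
    using step by auto
  have hn: "lor ?N ?N \<noteq> 0" "lor (s n) p = -1" "lor (s (Suc n)) p = -1"
    using step by auto
  have "lor ?N p = 0"
  proof -
    have "lor ?N p = lor (?F (s n)) (?F p) + lam n * lor (?F (s (Suc n))) (?F p) - (1 + lam n) * lor p p"
      by (simp add: fold_normal_def lor_lin IH(4))
    also have "\<dots> = 0" using hn pp by (simp add: IH(3) algebra_simps)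
    finally show ?thesis .
  qed
  then have fixp: "inversion ?N p = p" by (simp add: inv_fix lor_sym)
  have eq: "Phi p s lam (Suc n) = inversion ?N \<circ> ?F" using step.hyps Phi_Suc by simp
  have "inj (inversion ?N)"
    by (metis hn(1) inv_invol injI)
  then have "linear (inversion ?N \<circ> ?F)" "inj (inversion ?N \<circ> ?F)"
    using IH inv_lin linear_compose inj_compose by blast+
  then show ?case
    unfolding eq using IH hn(1) fixp
    by (simp add: inv_iso comp_def)
qed

theorem theorem2p7:
  fixes p :: "real^6" and J :: "nat set" and V :: "int set"
    and f :: "nat \<Rightarrow> int \<Rightarrow> real^6" and s :: "nat \<Rightarrow> real^6" and lam :: "nat \<Rightarrow> real"
  assumes "lor p p = -1"
    and "curve_index_set J" and "consecutive_ints V"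
    and "circ_net_sph p J V f s"
    and "nondegenerate J s"
    and "\<forall>j\<in>J. \<forall>k\<in>J. j \<noteq> k \<longrightarrow> \<not> proj_eq (s j) (s k)"
    and "\<forall>j\<in>J. lor (s j) p = -1"
    and "\<forall>j. j \<in> J \<and> Suc j \<in> J \<longrightarrow> lor (fold_normal p s lam j) (fold_normal p s lam j) \<noteq> 0"
  shows "circ_net_sph p J V (\<lambda>k t. Phi p s lam k (f k t)) (\<lambda>k. Phi p s lam k (s k))"
proof -
  have J1: "\<And>k. k \<in> J \<Longrightarrow> 1 \<le> k" using assms(2) unfolding curve_index_set_def
    by (metis less_one not_le)
  have Jd: "\<And>j k. 1 \<le> j \<Longrightarrow> j \<le> k \<Longrightarrow> k \<in> J \<Longrightarrow> j \<in> J" using assms(2)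
    unfolding curve_index_set_def by blast
  have P: "linear (Phi p s lam k) \<and> inj (Phi p s lam k) \<and>
    (\<forall>x y. lor (Phi p s lam k x) (Phi p s lam k y) = lor x y) \<and> Phi p s lam k p = p"
    if "k \<in> J" for k
  proof (rule Phi_props[OF J1[OF that] assms(1)], intro allI impI)
    fix j assume j: "1 \<le> j \<and> j < k"
    then have "j \<in> J" "Suc j \<in> J" using Jd[of j k] Jd[of "Suc j" k] that by auto
    then show "lor (fold_normal p s lam j) (fold_normal p s lam j) \<noteq> 0
              \<and> lor (s j) p = -1 \<and> lor (s (Suc j)) p = -1" using assms(7,8) by auto
  qed
  have nz: "Phi p s lam k x \<noteq> 0" if "k \<in> J" "x \<noteq> 0" for k x
  proof
    assume "Phi p s lam k x = 0"
    moreover have "Phi p s lam k 0 = 0" using P[OF that(1)] linear_0 by blast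
    ultimately show False using P[OF that(1)] that(2) by (metis injD)
  qed
  have N: "\<forall>j\<in>J. discrete_curve p V (f j) \<and> is_sphere p (s j) \<and> (\<forall>t\<in>V. lor (f j t) (s j) = 0)"
    and R: "\<forall>j. j \<in> J \<and> Suc j \<in> J \<longrightarrow> ribaucour_pair V (f j) (f (Suc j))"
    using assms(4) unfolding circ_net_sph_def by auto
  have part1: "\<forall>j\<in>J. discrete_curve p V (Phi p s lam j \<circ> f j) \<and> is_sphere p (Phi p s lam j (s j)) \<and>
      (\<forall>t\<in>V. lor (Phi p s lam j (f j t)) (Phi p s lam j (s j)) = 0)"
  proof
    fix j assume j: "j \<in> J"
    note Pj = P[OF j]
    have iso: "\<And>x y. lor (Phi p s lam j x) (Phi p s lam j y) = lor x y" using Pj by blast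
    have pf: "lor (Phi p s lam j x) p = lor x p" for x
      using Pj by (metis iso)
    show "discrete_curve p V (Phi p s lam j \<circ> f j) \<and> is_sphere p (Phi p s lam j (s j)) \<and>
      (\<forall>t\<in>V. lor (Phi p s lam j (f j t)) (Phi p s lam j (s j)) = 0)"
      using N j nz[OF j]
      by (auto simp: discrete_curve_def is_point_def is_sphere_def in_cone_def iso pf)
  qed
  have part2: "ribaucour_pair V (\<lambda>t. Phi p s lam j (f j t)) (\<lambda>t. Phi p s lam (Suc j) (f (Suc j) t))"
    if jj: "j \<in> J" "Suc j \<in> J" for j
  proof (unfold ribaucour_pair_def, intro allI impI)
    fix i assume ii: "i \<in> V \<and> i + 1 \<in> V"
    let ?F = "Phi p s lam j"
    let ?N = "fold_normal p s lam j"
    have Pj: "linear ?F" "\<And>x y. lor (?F x) (?F y) = lor x y" "?F p = p" using P[OF jj(1)] by auto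
    have Nn: "lor ?N ?N \<noteq> 0" using assms(8) jj by auto
    have eq: "Phi p s lam (Suc j) = inversion ?N \<circ> ?F" using J1[OF jj(1)] Phi_Suc by simp
    obtain c1 c2 c3 c4 where cc: "(c1, c2, c3, c4) \<noteq> (0, 0, 0, 0)"
      "c1 *\<^sub>R f j i + c2 *\<^sub>R f j (i+1) + c3 *\<^sub>R f (Suc j) (i+1) + c4 *\<^sub>R f (Suc j) i = 0"
      using R jj ii unfolding ribaucour_pair_def lin_dep4_def by blast
    define u where "u = c1 *\<^sub>R f j i + c2 *\<^sub>R f j (i+1)"
    have u2: "c3 *\<^sub>R f (Suc j) (i+1) + c4 *\<^sub>R f (Suc j) i = - u"
      using cc(2) unfolding u_def by (simp add: algebra_simps eq_neg_iff_add_eq_0)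
    have pts: "lor (f j i) p = 0" "lor (f j (i+1)) p = 0"
       "lor (f j i) (s j) = 0" "lor (f j (i+1)) (s j) = 0"
       "lor (f (Suc j) i) (s (Suc j)) = 0" "lor (f (Suc j) (i+1)) (s (Suc j)) = 0"
      using N jj ii by (auto simp: discrete_curve_def is_point_def)
    have us: "lor u (s j) = 0" "lor u p = 0" using pts by (simp_all add: u_def lor_lin)
    have "lor (- u) (s (Suc j)) = 0" unfolding u2[symmetric] using pts by (simp add: lor_lin)
    then have us2: "lor u (s (Suc j)) = 0" by (simp add: lor_neg_left)
    have "lor (?F u) ?N = 0"
    proof -
      have "lor (?F u) ?N = lor (?F u) (?F (s j)) + lam j * lor (?F u) (?F (s (Suc j))) - (1 + lam j) * lor (?F u) (?F p)"
        unfolding fold_normal_def by (simp add: lor_lin Pj(3))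
      then show ?thesis by (simp only: Pj(2) us us2)
    qed
    then have fixu: "inversion ?N (?F u) = ?F u" by (rule inv_fix)
    have lin2: "linear (inversion ?N \<circ> ?F)" using Pj(1) inv_lin linear_compose by blast
    have "c1 *\<^sub>R ?F (f j i) + c2 *\<^sub>R ?F (f j (i+1)) = ?F u"
      using Pj(1) by (simp add: u_def linear_add linear_scale)
    moreover have "c3 *\<^sub>R (inversion ?N \<circ> ?F) (f (Suc j) (i+1)) + c4 *\<^sub>R (inversion ?N \<circ> ?F) (f (Suc j) i)
        = (inversion ?N \<circ> ?F) (- u)"
      unfolding u2[symmetric] using lin2 by (simp only: linear_add linear_scale)
    moreover have "(inversion ?N \<circ> ?F) (- u) = - ?F u"
    proof -
      have "?F (- u) = - ?F u" using Pj(1) by (rule linear_neg)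
      moreover have "inversion ?N (- ?F u) = - inversion ?N (?F u)" using inv_lin by (rule linear_neg)
      ultimately show ?thesis using fixu by simp
    qed
    ultimately have "c1 *\<^sub>R ?F (f j i) + c2 *\<^sub>R ?F (f j (i+1)) + c3 *\<^sub>R Phi p s lam (Suc j) (f (Suc j) (i+1))
       + c4 *\<^sub>R Phi p s lam (Suc j) (f (Suc j) i) = 0"
      unfolding eq by (simp add: algebra_simps)
    then show "lin_dep4 (?F (f j i)) (?F (f j (i + 1))) (Phi p s lam (Suc j) (f (Suc j) (i + 1)))
           (Phi p s lam (Suc j) (f (Suc j) i))"
      unfolding lin_dep4_def using cc(1) by blast
  qed
  show ?thesis unfolding circ_net_sph_def using part1 part2 by (simp add: o_def)
qed

end
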